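(* Let $\Sigma$ be a finite totally ordered alphabet, $\$$ a symbol smaller than all letters of $\Sigma$, and let $W \in \Sigma^+$ be given together with its Lyndon factorization $W = L_1 L_2 \cdots L_k$. There is an algorithm (called Bwt_Lynd) that proceeds in $k$ iterations, where iteration $i$ ($1 \le i \le k$) computes $bwt(L_1 \cdots L_i\$)$ from $bwt(L_1\cdots L_{i-1}\$)$ (by computing $bwt(L_i\$)$ and the suffix array of $L_i\$$, computing for each suffix of $L_i\$$ the number of suffixes of $L_1\cdots L_{i-1}\$$ lexicographically smaller than it using $C$ and $rank$ queries on $bwt(L_1\cdots L_{i-1}\$)$ supported in constant time, and merging), such that at the end of iteration $k$ it has correctly computed $bwt(L_1\cdots L_k\$) = bwt(W\$)$, each iteration $i$ runs in $O(\sum_{j=1}^{i} |L_j|)$ time, and the overall running time is $O(k^2 M)$, where $M = \max_{1\le i\le k} |L_i|$.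
   Context: A Lyndon word is a nonempty primitive word strictly smaller (lexicographically) than all its other cyclic shifts; the Lyndon factorization of $W$ is the unique factorization $W = L_1\cdots L_k$ into Lyndon words with $L_1 \ge \cdots \ge L_k$. For $Y \in \Sigma^*$, $bwt(Y\$)$ is obtained by sorting all suffixes of $Y\$$ lexicographically and listing, for each suffix in this order, the symbol cyclically preceding it in $Y\$$; the suffix array of $Y\$$ lists the starting positions of its suffixes in lexicographic order. For a word $u$ and symbol $x$, $C(u,x)$ is the number of symbols of $u$ smaller than $x$, and $rank(u,x,t)$ is the number of occurrences of $x$ in $u[1,t]$. *)

theory Defs
  imports Main "HOL-Library.List_Lexorder" "HOL-Library.Option_ord"
begin

text \<open>Symbols of the alphabet Sigma are elements of a finite linearly ordered type 'a.
  The end marker (dollar) is None :: 'a option, which (Option_ord) is smaller than every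
  letter Some x.  Words are compared lexicographically (List_Lexorder: a proper prefix is smaller).\<close>

definition dollar_word :: "'a list \<Rightarrow> 'a option list" where
  "dollar_word Y = map Some Y @ [None]"

definition suffix_array :: "('b::linorder) list \<Rightarrow> nat list" where
  "suffix_array Y = sort_key (\<lambda>i. drop i Y) [0..<length Y]"

definition bwt :: "('b::linorder) list \<Rightarrow> 'b list" where
  "bwt Y = map (\<lambda>i. Y ! ((i + length Y - 1) mod length Y)) (suffix_array Y)"

definition C :: "('b::linorder) list \<Rightarrow> 'b \<Rightarrow> nat" where
  "C u x = length (filter (\<lambda>y. y < x) u)"

definition rank :: "'b list \<Rightarrow> 'b \<Rightarrow> nat \<Rightarrow> nat" where
  "rank u x t = count_list (take t u) x"

definition primitive :: "'a list \<Rightarrow> bool" where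
  "primitive w \<longleftrightarrow> (\<forall>u k. w = concat (replicate k u) \<longrightarrow> k = 1)"

definition lyndon :: "('a::linorder) list \<Rightarrow> bool" where
  "lyndon w \<longleftrightarrow> w \<noteq> [] \<and> primitive w \<and> (\<forall>i. 0 < i \<and> i < length w \<longrightarrow> w < rotate i w)"

definition lyndon_factorization :: "('a::linorder) list \<Rightarrow> 'a list list \<Rightarrow> bool" where
  "lyndon_factorization W Ls \<longleftrightarrow>
     concat Ls = W \<and> (\<forall>L\<in>set Ls. lyndon L) \<and> sorted_wrt (\<lambda>x y. x \<ge> y) Ls"

text \<open>Cost model: each C / rank query costs 1 step (constant-time rank support);
  building bwt(L$) and the suffix array of L$ is charged |L$| steps (linear-time
  suffix array construction used as a black box); each output symbol of the merge costs 1.\<close>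

text \<open>back_ranks B L returns [r_0,...,r_n] (n = |L|), where r_j is meant to be the number of
  suffixes of P$ (with B = bwt(P$)) that are smaller than the suffix of L$ starting at j,
  computed right to left by backward search; plus the number of steps.\<close>
fun back_ranks :: "('a::linorder) option list \<Rightarrow> 'a list \<Rightarrow> nat list \<times> nat" where
  "back_ranks B [] = ([0], 1)"
| "back_ranks B (x # xs) =
     (let (rs, t) = back_ranks B xs; r = hd rs
      in ((C B (Some x) + rank B (Some x) r) # rs, t + 1))"

text \<open>Merge: the rows of B stay in order; an insertion (r, y) is emitted after exactly r rows of B.\<close>
fun merge_bwt :: "'b list \<Rightarrow> (nat \<times> 'b) list \<Rightarrow> nat \<Rightarrow> 'b list \<times> nat" where
  "merge_bwt [] [] k = ([], 1)"
| "merge_bwt (b # bs) [] k = (let (res, t) = merge_bwt bs [] (Suc k) in (b # res, t + 1))"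
| "merge_bwt [] ((r, y) # ins) k = (let (res, t) = merge_bwt [] ins k in (y # res, t + 1))"
| "merge_bwt (b # bs) ((r, y) # ins) k =
     (if r \<le> k then (let (res, t) = merge_bwt (b # bs) ins k in (y # res, t + 1))
      else (let (res, t) = merge_bwt bs ((r, y) # ins) (Suc k) in (b # res, t + 1)))"

definition lynd_step :: "('a::linorder) option list \<Rightarrow> 'a list \<Rightarrow> 'a option list \<times> nat" where
  "lynd_step B L =
     (let Y = dollar_word L; SA = suffix_array Y; BL = bwt Y;
          (rs, c_r) = back_ranks B L;
          ins = [(rs ! (SA ! m), BL ! m). m \<leftarrow> [0..<length Y], SA ! m \<noteq> 0];
          (B', c_m) = merge_bwt B ins 0
      in (B', length Y + c_r + length Y + c_m))"

fun lynd_run :: "('a::linorder) option list \<Rightarrow> 'a list list \<Rightarrow> ('a option list \<times> nat) list" where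
  "lynd_run B [] = []"
| "lynd_run B (L # Ls) = (let (B', c) = lynd_step B L in (B', c) # lynd_run B' Ls)"

text \<open>Bwt_Lynd: starts from bwt($) = [$]; the i-th entry (0-based) of the trace is the
  output of iteration i+1 together with its number of steps.\<close>
definition bwt_lynd_trace :: "('a::linorder) list list \<Rightarrow> ('a option list \<times> nat) list" where
  "bwt_lynd_trace Ls = lynd_run [None] Ls"

end

theory Submission
  imports Defs "HOL-Library.Sublist"
begin


lemma lex_cancel[simp]: "((u::'a::linorder list) @ x < u @ y) \<longleftrightarrow> x < y"
  by (induction u) auto

lemma Nil_less_iff: "([]::'a::linorder list) < x \<longleftrightarrow> x \<noteq> []"
  by (cases x) auto

lemma lex_prefix_less: "((u::'a::linorder list) < u @ x) \<longleftrightarrow> x \<noteq> []"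
  by (induction u) (auto simp: Nil_less_iff)

lemma lex_G: "\<not> prefix u v \<Longrightarrow> \<not> prefix v u \<Longrightarrow> ((u::'a::linorder list) @ x < v @ y) \<longleftrightarrow> u < v"
proof (induction u arbitrary: v)
  case Nil then show ?case by simp
next
  case (Cons a u)
  then show ?case by (cases v) auto
qed

lemma dw_less: "dollar_word u < dollar_word v \<longleftrightarrow> (u::'a::linorder list) < v"
proof (induction u arbitrary: v)
  case Nil then show ?case by (cases v) (auto simp: dollar_word_def)
next
  case (Cons a u)
  then show ?case by (cases v) (auto simp: dollar_word_def)
qed



lemma prefix_same_len: "prefix x y \<Longrightarrow> length x = length y \<Longrightarrow> x = y"
  by (auto simp: prefix_def)

lemma lyndon_suffix_greater:
  assumes ly: "lyndon (L::'a::linorder list)" and j: "0 < j" "j < length L"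
  shows "L < drop j L"
proof (rule ccontr)
  assume nl: "\<not> L < drop j L"
  define s where "s = drop j L"
  define x where "x = take j L"
  have Lxs: "L = x @ s" by (simp add: s_def x_def)
  have lx: "length x = j" using j by (simp add: x_def)
  have rot: "rotate j L = s @ x" using j by (simp add: rotate_drop_take s_def x_def)
  have "L < rotate j L" using ly j unfolding lyndon_def by blast
  hence L1: "L < s @ x" using rot by simp
  have "s \<noteq> L" proof
    assume "s = L" hence "length (drop j L) = length L" by (simp add: s_def)
    thus False using j by simp
  qed
  hence sL: "s < L" using nl s_def by (meson neqE)
  show False
  proof (cases "prefix s L")
    case True
    then obtain y where Lsy: "L = s @ y" by (auto simp: prefix_def)
    have ly': "length y = j" using Lsy Lxs lx by (metis add_left_cancel length_append add.commute)
    have "rotate (length s) L = y @ s"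
      using Lsy j ly' by (simp add: rotate_drop_take)
    moreover have "0 < length s" "length s < length L" using j by (auto simp: s_def)
    ultimately have L2: "L < y @ s" using ly unfolding lyndon_def by metis
    have yx: "y < x" using L1 Lsy by simp
    have xy_ne: "x \<noteq> y" using L2 Lxs by auto
    have "\<not> prefix x y" "\<not> prefix y x" using xy_ne lx ly' prefix_same_len by metis+
    hence "x < y" using L2 Lxs lex_G by metis
    thus False using yx by simp
  next
    case False
    have "\<not> prefix L s" using j by (auto simp: s_def dest: prefix_length_le)
    hence "s @ x < L @ []" using lex_G[OF False] sL by blast
    thus False using L1 by simp
  qed
qed



lemma lyndon_suffix_ge:
  assumes "lyndon (F::'a::linorder list)" "suffix w F" "w \<noteq> []"
  shows "F \<le> w"
proof -
  obtain z where Fz: "F = z @ w" using assms(2) by (auto simp: suffix_def)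
  hence w: "w = drop (length z) F" by simp
  show ?thesis
  proof (cases "length z = 0")
    case True thus ?thesis using Fz by simp
  next
    case False
    have "length z < length F" using Fz assms(3) by simp
    thus ?thesis using lyndon_suffix_greater[OF assms(1), of "length z"] False w by simp
  qed
qed

lemma less_append_right: "(L::'a::linorder list) < s \<Longrightarrow> L < s @ x"
proof (cases "prefix L s")
  case True
  assume "L < s"
  then obtain w where "s = L @ w" "w \<noteq> []" using True by (auto simp: prefix_def lex_prefix_less)
  thus ?thesis by (simp add: lex_prefix_less)
next
  case False
  assume Ls: "L < s"
  have "\<not> prefix s L"
  proof
    assume "prefix s L" then obtain w where "L = s @ w" by (auto simp: prefix_def)
    hence "s \<le> L" by (cases w) (auto simp: lex_prefix_less order.strict_implies_order)
    thus False using Ls by simp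
  qed
  thus ?thesis using lex_G[OF False, of "[]" x] Ls by simp
qed

lemma good_concat:
  assumes "\<forall>F\<in>set Fs. lyndon F \<and> L \<le> F" "lyndon (L::'a::linorder list)"
    "suffix w (concat Fs)" "w \<noteq> []"
  shows "L < w @ L"
  using assms
proof (induction Fs arbitrary: w)
  case Nil then show ?case by (simp add: suffix_def)
next
  case (Cons F Fs)
  have Lne: "L \<noteq> []" using Cons.prems(2) by (simp add: lyndon_def)
  from Cons.prems(3) have "suffix w (concat Fs) \<or> (\<exists>w'. w = w' @ concat Fs \<and> suffix w' F)"
    by (simp add: suffix_append)
  then show ?case
  proof
    assume "suffix w (concat Fs)" thus ?thesis using Cons by simp
  next
    assume "\<exists>w'. w = w' @ concat Fs \<and> suffix w' F"
    then obtain w' where w': "w = w' @ concat Fs" "suffix w' F" by blast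
    show ?thesis
    proof (cases "w' = []")
      case True thus ?thesis using Cons w' by simp
    next
      case False
      have "F \<le> w'" using lyndon_suffix_ge[of F w'] w' False Cons.prems(1) by simp
      hence Lw: "L \<le> w'" using Cons.prems(1) by (meson list.set_intros(1) order_trans)
      show ?thesis
      proof (cases "L = w'")
        case True thus ?thesis using w' Lne by (simp add: lex_prefix_less)
      next
        case False
        hence "L < w'" using Lw by simp
        thus ?thesis using w' less_append_right by (metis append.assoc)
      qed
    qed
  qed
qed



lemma not_append_less_self: "\<not> ((u::'a::linorder list) @ x < u)"
  using lex_cancel[of u x "[]"] by simp

lemma A_words:
  assumes good: "\<forall>w. suffix w P \<and> w \<noteq> [] \<longrightarrow> (L::'a::linorder list) < w @ L"
    and u: "suffix u P" and v: "suffix v P"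
  shows "(u @ L < v @ L) \<longleftrightarrow> u < v"
proof (cases "prefix u v")
  case True
  then obtain w where vw: "v = u @ w" by (auto simp: prefix_def)
  show ?thesis
  proof (cases "w = []")
    case True thus ?thesis using vw by simp
  next
    case False
    have "suffix w P" using v vw suffix_appendD by blast
    hence "L < w @ L" using good False by blast
    thus ?thesis using vw False by (simp add: lex_prefix_less)
  qed
next
  case F1: False
  show ?thesis
  proof (cases "prefix v u")
    case True
    then obtain w where uw: "u = v @ w" by (auto simp: prefix_def)
    have "suffix w P" using u uw suffix_appendD by blast
    hence "w \<noteq> [] \<longrightarrow> L < w @ L" using good by blast
    hence "\<not> w @ L < L" by (cases "w = []") (auto dest: less_asym)
    moreover have "(u @ L < v @ L) \<longleftrightarrow> w @ L < L" using uw lex_cancel[of v "w@L" L] by simp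
    moreover have "\<not> u < v" using uw not_append_less_self[of v w] by simp
    ultimately show ?thesis by simp

  next
    case False
    thus ?thesis using lex_G[OF F1 False] by simp
  qed
qed

lemma B_words:
  assumes suf: "\<forall>j. 0 < j \<and> j < length L \<longrightarrow> (L::'a::linorder list) < drop j L"
    and j: "0 < j" "j \<le> length L"
  shows "(u @ L < drop j L) \<longleftrightarrow> u < drop j L"
proof (cases "prefix u (drop j L)")
  case True
  then obtain s where ts: "drop j L = u @ s" by (auto simp: prefix_def)
  show ?thesis
  proof (cases "s = []")
    case True thus ?thesis using ts not_append_less_self[of u L] by simp
  next
    case False
    have "s = drop (j + length u) L" using ts by (metis add.commute append_eq_conv_conj drop_drop)
    moreover have "j + length u < length L" using arg_cong[OF ts, of length] False j by (simp add: length_greater_0_conv[symmetric] del: length_greater_0_conv)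
    ultimately have "L < s" using suf j by simp
    thus ?thesis using ts False by (simp add: lex_prefix_less)
  qed
next
  case F1: False
  show ?thesis
  proof (cases "prefix (drop j L) u")
    case True
    then obtain s where us: "u = drop j L @ s" by (auto simp: prefix_def)
    thus ?thesis using not_append_less_self[of "drop j L" "s @ L"] not_append_less_self[of "drop j L" s] by simp
  next
    case False
    thus ?thesis using lex_G[OF F1 False, of L "[]"] by simp
  qed
qed



definition pre :: "'b list \<Rightarrow> 'b list \<Rightarrow> 'b" where
  "pre Y s = Y ! ((length Y - length s + length Y - 1) mod length Y)"

lemma sa_set: "set (suffix_array Y) = {0..<length Y}"
  by (simp add: suffix_array_def)
lemma sa_distinct: "distinct (suffix_array Y)"
  by (simp add: suffix_array_def)
lemma sa_length: "length (suffix_array Y) = length Y"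
  by (simp add: suffix_array_def)
lemma sa_sorted: "sorted (map (\<lambda>i. drop i Y) (suffix_array Y))"
  by (simp add: suffix_array_def)

lemma inj_drop: "inj_on (\<lambda>i. drop i Y) {0..<length Y}"
  by (rule inj_onI) (metis atLeastLessThan_iff diff_diff_cancel length_drop less_imp_le_nat)

lemma bwt_pre: "bwt Y = map (pre Y) (map (\<lambda>i. drop i Y) (suffix_array Y))"
  unfolding bwt_def pre_def map_map
  by (rule map_cong) (auto simp: sa_set)

lemma sa_sorted_list:
  "map (\<lambda>i. drop i Y) (suffix_array Y) = sorted_list_of_set ((\<lambda>i. drop i Y) ` {0..<length Y})"
proof (rule sorted_distinct_set_unique)
  show "sorted (map (\<lambda>i. drop i Y) (suffix_array Y))" by (rule sa_sorted)
  show "distinct (map (\<lambda>i. drop i Y) (suffix_array Y))"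
    using inj_drop[of Y] sa_distinct[of Y] sa_set[of Y] by (simp add: distinct_map)
  show "sorted (sorted_list_of_set ((\<lambda>i. drop i Y) ` {0..<length Y}))" by simp
  show "distinct (sorted_list_of_set ((\<lambda>i. drop i Y) ` {0..<length Y}))" by simp
  show "set (map (\<lambda>i. drop i Y) (suffix_array Y)) = set (sorted_list_of_set ((\<lambda>i. drop i Y) ` {0..<length Y}))"
    by (simp add: sa_set)
qed

lemma take_filter_sorted:
  "sorted (map f xs) \<Longrightarrow> take (length (filter (\<lambda>i. f i < X) xs)) xs = filter (\<lambda>i. f i < X) xs"
proof (induction xs)
  case Nil then show ?case by simp
next
  case (Cons a xs)
  show ?case
  proof (cases "f a < X")
    case True thus ?thesis using Cons by simp
  next
    case False
    have "\<forall>y\<in>set xs. \<not> f y < X" using Cons.prems False by (auto dest: order_trans)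
    hence "filter (\<lambda>i. f i < X) xs = []" by (simp add: filter_empty_conv)
    thus ?thesis using False by simp
  qed
qed

lemma count_list_filter: "count_list xs c = length (filter (\<lambda>y. y = c) xs)"
  by (induction xs) auto

lemma filter_sa_card:
  "length (filter Q (suffix_array Y)) = card {i. i < length Y \<and> Q i}"
  by (simp add: distinct_length_filter[OF sa_distinct] sa_set) (metis Collect_conj_eq Int_commute lessThan_atLeast0 lessThan_def)

lemma shift_mod: "(i::nat) < n \<Longrightarrow> (i + n - 1) mod n = (if i = 0 then n - 1 else i - 1)"
  by (cases i) auto

lemma card_shift:
  assumes "0 < (n::nat)"
  shows "card {i. i < n \<and> Q ((i + n - 1) mod n)} = card {i. i < n \<and> Q i}"
proof -
  define f :: "nat \<Rightarrow> nat" where "f i = (if i = 0 then n - 1 else i - 1)" for i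
  have eq: "{i. i < n \<and> Q ((i + n - 1) mod n)} = {i. i < n \<and> Q (f i)}"
    using shift_mod by (auto simp: f_def)
  have inj: "inj_on f {i. i < n \<and> Q (f i)}"
    by (rule inj_onI) (auto simp: f_def split: if_splits)
  have img: "f ` {i. i < n \<and> Q (f i)} = {i. i < n \<and> Q i}"
  proof
    show "f ` {i. i < n \<and> Q (f i)} \<subseteq> {i. i < n \<and> Q i}" using assms by (auto simp: f_def)
    show "{i. i < n \<and> Q i} \<subseteq> f ` {i. i < n \<and> Q (f i)}"
    proof
      fix i assume i: "i \<in> {i. i < n \<and> Q i}"
      show "i \<in> f ` {i. i < n \<and> Q (f i)}"
      proof (cases "i = n - 1")
        case True
        hence "f 0 = i" by (simp add: f_def)
        thus ?thesis using i assms by (auto intro!: image_eqI[of _ _ 0])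
      next
        case False
        hence "f (Suc i) = i" by (simp add: f_def)
        thus ?thesis using i False by (auto intro!: image_eqI[of _ _ "Suc i"])
      qed
    qed
  qed
  show ?thesis using eq card_image[OF inj] img by simp
qed

definition cnt :: "('b::linorder) list \<Rightarrow> 'b list \<Rightarrow> nat" where
  "cnt Y X = card {i. i < length Y \<and> drop i Y < X}"

lemma backward_step:
  fixes P :: "('a::linorder) list"
  defines "Y \<equiv> dollar_word P"
  shows "C (bwt Y) (Some x) + rank (bwt Y) (Some x) (cnt Y X) = cnt Y (Some x # X)"
proof -
  define n where "n = length Y"
  have n: "0 < n" "n = length P + 1" by (auto simp: n_def Y_def dollar_word_def)
  have lastY: "Y ! (n - 1) = None" by (simp add: n_def Y_def dollar_word_def nth_append)
  define SA where "SA = suffix_array Y"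
  define pr where "pr i = Y ! ((i + n - 1) mod n)" for i
  have B: "bwt Y = map pr SA" unfolding bwt_def SA_def pr_def n_def by simp
  have "C (bwt Y) (Some x) = length (filter (\<lambda>i. pr i < Some x) SA)"
    by (simp add: C_def B filter_map comp_def)
  also have "\<dots> = card {i. i < n \<and> pr i < Some x}" by (simp add: SA_def filter_sa_card n_def)
  also have "\<dots> = card {i. i < n \<and> Y ! i < Some x}"
    unfolding pr_def using card_shift[OF n(1), of "\<lambda>i. Y ! i < Some x"] by simp
  finally have C1: "C (bwt Y) (Some x) = card {i. i < n \<and> Y ! i < Some x}" .
  have t: "cnt Y X = length (filter (\<lambda>i. drop i Y < X) SA)"
    by (simp add: cnt_def SA_def filter_sa_card)
  have "take (cnt Y X) SA = filter (\<lambda>i. drop i Y < X) SA"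
    unfolding t SA_def by (rule take_filter_sorted[OF sa_sorted])
  hence "rank (bwt Y) (Some x) (cnt Y X) = length (filter (\<lambda>y. y = Some x) (map pr (filter (\<lambda>i. drop i Y < X) SA)))"
    by (simp add: rank_def B take_map count_list_filter)
  also have "\<dots> = length (filter (\<lambda>i. drop i Y < X \<and> pr i = Some x) SA)"
    by (simp add: filter_map comp_def conj_commute)
  also have "\<dots> = card {i. i < n \<and> drop i Y < X \<and> pr i = Some x}"
    by (simp add: SA_def filter_sa_card n_def)
  also have "\<dots> = card {i. i < n \<and> Y ! i = Some x \<and> drop (Suc i) Y < X}"
  proof -
    have "\<And>i. i < n \<Longrightarrow> (drop i Y < X \<and> pr i = Some x) =
         (\<lambda>j. Y ! j = Some x \<and> drop (Suc j) Y < X) ((i + n - 1) mod n)"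
    proof -
      fix i assume i: "i < n"
      show "?thesis i"
      proof (cases "i = 0")
        case True thus ?thesis using lastY i by (simp add: pr_def shift_mod)
      next
        case False
        have "(i + n - Suc 0) mod n = i - 1" using shift_mod[OF i] False by simp
        thus ?thesis using False by (auto simp: pr_def)
      qed
    qed
    hence "{i. i < n \<and> drop i Y < X \<and> pr i = Some x} =
        {i. i < n \<and> (\<lambda>j. Y ! j = Some x \<and> drop (Suc j) Y < X) ((i + n - 1) mod n)}" by blast
    thus ?thesis using card_shift[OF n(1), of "\<lambda>j. Y ! j = Some x \<and> drop (Suc j) Y < X"] by simp
  qed
  finally have R1: "rank (bwt Y) (Some x) (cnt Y X) = card {i. i < n \<and> Y ! i = Some x \<and> drop (Suc i) Y < X}" .
  have split: "{i. i < n \<and> drop i Y < Some x # X} =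
     {i. i < n \<and> Y ! i < Some x} \<union> {i. i < n \<and> Y ! i = Some x \<and> drop (Suc i) Y < X}"
  proof -
    have "\<And>i. i < n \<Longrightarrow> drop i Y = Y ! i # drop (Suc i) Y"
      by (simp add: n_def Cons_nth_drop_Suc)
    thus ?thesis by auto
  qed
  have "cnt Y (Some x # X) = card {i. i < n \<and> drop i Y < Some x # X}" by (simp add: cnt_def n_def)
  also have "\<dots> = card {i. i < n \<and> Y ! i < Some x} + card {i. i < n \<and> Y ! i = Some x \<and> drop (Suc i) Y < X}"
    unfolding split by (rule card_Un_disjoint) auto
  finally show ?thesis using C1 R1 by simp
qed



lemma cnt_None: "cnt Y [None] = 0"
proof -
  have "{i. i < length Y \<and> drop i Y < [None]} = {}"
  proof (safe)
    fix i assume "i < length Y" "drop i Y < [None]"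
    thus "i \<in> {}" by (simp add: Cons_nth_drop_Suc[symmetric])
  qed
  thus ?thesis by (simp add: cnt_def)
qed

lemma dw_Cons: "dollar_word (x # xs) = Some x # dollar_word xs"
  by (simp add: dollar_word_def)

lemma back_ranks_correct:
  fixes P L :: "('a::linorder) list"
  shows "back_ranks (bwt (dollar_word P)) L =
     (map (\<lambda>j. cnt (dollar_word P) (drop j (dollar_word L))) [0..<length L + 1], length L + 1)"
proof (induction L)
  case Nil
  show ?case using cnt_None by (simp add: dollar_word_def)
next
  case (Cons x xs)
  let ?f = "\<lambda>j. cnt (dollar_word P) (drop j (dollar_word (x # xs)))"
  have "[0..<length (x # xs) + 1] = 0 # map Suc [0..<length xs + 1]"
    by (simp add: upt_conv_Cons map_Suc_upt del: upt_Suc)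
  hence eq: "map ?f [0..<length (x # xs) + 1] =
     ?f 0 # map (\<lambda>j. cnt (dollar_word P) (drop j (dollar_word xs))) [0..<length xs + 1]"
    by (simp only: list.map map_map comp_def dw_Cons drop_Suc_Cons)
  have f0: "?f 0 = C (bwt (dollar_word P)) (Some x) + rank (bwt (dollar_word P)) (Some x) (cnt (dollar_word P) (dollar_word xs))"
    using backward_step[of P x "dollar_word xs"] by (simp add: dw_Cons)
  show ?case using Cons eq f0 by (simp add: upt_conv_Cons del: upt_Suc)
qed



lemma slos_insert_min:
  assumes "finite S" "\<forall>y\<in>S. x < y"
  shows "sorted_list_of_set (insert x S) = x # sorted_list_of_set (S::'c::linorder set)"
proof -
  have "x \<notin> S" using assms by auto
  hence "S - {x} = S" by auto
  hence "sorted_list_of_set (insert x S) = insort x (sorted_list_of_set S)" using assms by simp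
  also have "\<dots> = x # sorted_list_of_set S" using assms by (auto intro!: insort_is_Cons less_imp_le)
  finally show ?thesis .
qed

lemma merge_correct:
  fixes xs zs :: "'c::linorder list"
  assumes "sorted_wrt (<) xs" "sorted_wrt (<) zs" "set xs \<inter> set zs = {}"
  shows "merge_bwt (map G xs) (map (\<lambda>z. (k + length (filter (\<lambda>x. x < z) xs), G z)) zs) k
     = (map G (sorted_list_of_set (set xs \<union> set zs)), length xs + length zs + 1)"
  using assms
proof (induction "length xs + length zs" arbitrary: xs zs k rule: less_induct)
  case less
  show ?case
  proof (cases xs)
    case Nil
    show ?thesis
    proof (cases zs)
      case Nil thus ?thesis using \<open>xs = []\<close> by simp
    next
      case (Cons z zs')
      have IH: "merge_bwt (map G []) (map (\<lambda>z. (k + length (filter (\<lambda>x. x < z) []), G z)) zs') k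
          = (map G (sorted_list_of_set (set [] \<union> set zs')), length [] + length zs' + 1)"
        using less.hyps[of "[]" zs' k] less.prems Cons \<open>xs = []\<close> by auto
      have "sorted_list_of_set (set zs) = z # sorted_list_of_set (set zs')"
        using less.prems Cons slos_insert_min[of "set zs'" z] by simp
      thus ?thesis using IH Cons \<open>xs = []\<close> by simp
    qed
  next
    case (Cons x xs')
    show ?thesis
    proof (cases zs)
      case Nil
      have IH: "merge_bwt (map G xs') (map (\<lambda>z. (Suc k + length (filter (\<lambda>x. x < z) xs'), G z)) []) (Suc k)
          = (map G (sorted_list_of_set (set xs' \<union> set [])), length xs' + length [] + 1)"
        using less.hyps[of xs' "[]" "Suc k"] less.prems Cons \<open>zs = []\<close> by auto
      have "sorted_list_of_set (set xs) = x # sorted_list_of_set (set xs')"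
        using less.prems Cons slos_insert_min[of "set xs'" x] by simp
      thus ?thesis using IH Cons \<open>zs = []\<close> by simp
    next
      case (Cons z zs')
      note xs = \<open>xs = x # xs'\<close>
      have xz: "x \<noteq> z" using less.prems(3) xs Cons by auto
      show ?thesis
      proof (cases "z < x")
        case True
        have f0: "filter (\<lambda>y. y < z) xs = []"
          using less.prems(1) xs True by (auto simp: filter_empty_conv dest: less_trans)
        have IH: "merge_bwt (map G xs) (map (\<lambda>z. (k + length (filter (\<lambda>x. x < z) xs), G z)) zs') k
          = (map G (sorted_list_of_set (set xs \<union> set zs')), length xs + length zs' + 1)"
          using less.hyps[of xs zs' k] less.prems Cons by auto
        have "\<forall>y\<in>set xs \<union> set zs'. z < y"
          using less.prems(1,2) xs Cons True by (auto dest: less_trans)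
        hence "sorted_list_of_set (set xs \<union> set zs) = z # sorted_list_of_set (set xs \<union> set zs')"
          using Cons slos_insert_min[of "set xs \<union> set zs'" z] by simp
        thus ?thesis using IH Cons xs f0 by simp
      next
        case False
        hence xz': "x < z" using xz by simp
        have IH: "merge_bwt (map G xs') (map (\<lambda>z. (Suc k + length (filter (\<lambda>x. x < z) xs'), G z)) zs) (Suc k)
          = (map G (sorted_list_of_set (set xs' \<union> set zs)), length xs' + length zs + 1)"
          using less.hyps[of xs' zs "Suc k"] less.prems xs by auto
        have allz: "\<forall>w\<in>set zs. x < w" using less.prems(2) Cons xz' by (auto dest: less_trans)
        hence meq: "map (\<lambda>z. (k + length (filter (\<lambda>x. x < z) xs), G z)) zs =
              map (\<lambda>z. (Suc k + length (filter (\<lambda>x. x < z) xs'), G z)) zs"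
          using xs by auto
        have "\<forall>y\<in>set xs' \<union> set zs. x < y" using allz less.prems(1) xs by auto
        hence sl: "sorted_list_of_set (set xs \<union> set zs) = x # sorted_list_of_set (set xs' \<union> set zs)"
          using xs slos_insert_min[of "set xs' \<union> set zs" x] by simp
        have r: "\<not> k + length (filter (\<lambda>y. y < z) xs) \<le> k" using xs xz' by simp
        have "merge_bwt (map G xs) (map (\<lambda>z. (k + length (filter (\<lambda>x. x < z) xs), G z)) zs) k
            = (let (res, t) = merge_bwt (map G xs') (map (\<lambda>z. (k + length (filter (\<lambda>x. x < z) xs), G z)) zs) (Suc k)
               in (G x # res, t + 1))"
          using xs Cons r by simp
        also have "\<dots> = (let (res, t) = (map G (sorted_list_of_set (set xs' \<union> set zs)), length xs' + length zs + 1)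
               in (G x # res, t + 1))"
          using IH meq by (simp only:)
        also have "\<dots> = (map G (sorted_list_of_set (set xs \<union> set zs)), length xs + length zs + 1)"
          using sl xs by simp
        finally show ?thesis .
      qed
    qed
  qed
qed



lemma lc_filter:
  "[(F (xs ! m), g (xs ! m)). m \<leftarrow> [0..<length xs], Q (xs ! m)] = map (\<lambda>x. (F x, g x)) (filter Q xs)"
proof -
  have "[(F (xs ! m), g (xs ! m)). m \<leftarrow> [0..<length xs], Q (xs ! m)]
     = concat (map (\<lambda>x. if Q x then [(F x, g x)] else []) (map (nth xs) [0..<length xs]))"
    by (simp add: comp_def)
  also have "\<dots> = concat (map (\<lambda>x. if Q x then [(F x, g x)] else []) xs)"
    by (simp only: map_nth)
  also have "\<dots> = map (\<lambda>x. (F x, g x)) (filter Q xs)" by (induction xs) auto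
  finally show ?thesis .
qed

lemma lynd_step_correct:
  fixes P L :: "('a::linorder) list"
  assumes good: "\<forall>w. suffix w P \<and> w \<noteq> [] \<longrightarrow> L < w @ L"
    and suf: "\<forall>j. 0 < j \<and> j < length L \<longrightarrow> L < drop j L"
  shows "lynd_step (bwt (dollar_word P)) L = (bwt (dollar_word (P @ L)), 4 * length L + length P + 5)"
proof -
  define Y where "Y = dollar_word P"
  define Y' where "Y' = dollar_word (P @ L)"
  define YL where "YL = dollar_word L"
  define n where "n = length P + 1"
  define n' where "n' = length P + length L + 1"
  define nL where "nL = length L + 1"
  have lens: "length Y = n" "length Y' = n'" "length YL = nL"
    by (simp_all add: Y_def Y'_def YL_def n_def n'_def nL_def dollar_word_def)
  define SAY where "SAY = suffix_array Y"
  define SAL where "SAL = suffix_array YL"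
  define G where "G = pre Y'"
  define xs where "xs = map (\<lambda>i. drop i Y') SAY"
  define zs where "zs = map (\<lambda>j. drop j YL) (filter (\<lambda>j. j \<noteq> 0) SAL)"
  have d1: "drop i Y = dollar_word (drop i P)" "drop i Y' = dollar_word (drop i P @ L)" if "i < n" for i
    using that by (simp_all add: Y_def Y'_def n_def dollar_word_def drop_map)
  have d2: "drop j YL = dollar_word (drop j L)" if "j \<le> length L" for j
    using that by (simp add: YL_def dollar_word_def drop_map)
  have d2': "drop (length P + j) Y' = drop j YL" for j
    by (simp add: YL_def Y'_def dollar_word_def)
  have A': "(drop i Y' < drop i' Y') \<longleftrightarrow> (drop i Y < drop i' Y)" if "i < n" "i' < n" for i i'
    using that by (simp add: d1 dw_less A_words[OF good suffix_drop suffix_drop])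
  have B': "(drop i Y' < drop j YL) \<longleftrightarrow> (drop i Y < drop j YL)" if "i < n" "0 < j" "j \<le> length L" for i j
    using that by (simp add: d1 d2 dw_less B_words[OF suf, of j])
  have bY: "bwt Y = map G xs"
  proof -
    have "bwt Y = map (\<lambda>i. Y ! ((i + n - 1) mod n)) SAY" by (simp add: bwt_def SAY_def lens)
    also have "\<dots> = map (\<lambda>i. G (drop i Y')) SAY"
    proof (rule map_cong[OF refl])
      fix i assume "i \<in> set SAY"
      hence i: "i < n" by (simp add: SAY_def sa_set lens)
      have "G (drop i Y') = Y' ! ((i + n' - 1) mod n')"
        using i lens by (simp add: G_def pre_def n_def n'_def)
      moreover have "Y ! ((i + n - 1) mod n) = Y' ! ((i + n' - 1) mod n')"
      proof (cases "i = 0")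
        case True thus ?thesis
          by (simp add: Y_def Y'_def n_def n'_def dollar_word_def nth_append)
      next
        case False
        have m1: "(i + n - 1) mod n = i - 1" using shift_mod[OF i] False by simp
        have m2: "(i + n' - 1) mod n' = i - 1" using shift_mod[of i n'] i False by (simp add: n_def n'_def)
        show ?thesis using i False unfolding m1 m2
          by (simp add: Y_def Y'_def n_def dollar_word_def nth_append)
      qed
      ultimately show "Y ! ((i + n - 1) mod n) = G (drop i Y')" by simp
    qed
    finally show ?thesis by (simp add: xs_def)
  qed
  define rs where "rs = map (\<lambda>j. cnt Y (drop j YL)) [0..<nL]"
  have br: "back_ranks (bwt Y) L = (rs, nL)"
    using back_ranks_correct[of P L] by (simp add: rs_def Y_def YL_def nL_def)
  have rs_ok: "rs ! j = 0 + length (filter (\<lambda>x. x < drop j YL) xs)" if "0 < j" "j < nL" for j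
  proof -
    have "rs ! j = card {i. i < n \<and> drop i Y < drop j YL}"
      using that by (simp add: rs_def cnt_def lens)
    also have "\<dots> = card {i. i < n \<and> drop i Y' < drop j YL}"
      using B' that by (metis (no_types, lifting) Suc_eq_plus1 less_Suc_eq_le nL_def)
    also have "\<dots> = length (filter (\<lambda>i. drop i Y' < drop j YL) SAY)"
      using filter_sa_card[of "\<lambda>i. drop i Y' < drop j YL" Y] by (simp add: SAY_def lens)
    finally show ?thesis by (simp add: xs_def filter_map comp_def)
  qed
  have pre_L: "YL ! ((j + nL - 1) mod nL) = G (drop j YL)" if "0 < j" "j < nL" for j
  proof -
    have m: "(j + nL - 1) mod nL = j - 1" using shift_mod[of j nL] that by simp
    have "G (drop j YL) = Y' ! ((length P + j + n' - 1) mod n')"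
      using that lens by (simp add: G_def pre_def n'_def nL_def)
    also have "(length P + j + n' - 1) mod n' = length P + j - 1"
      using shift_mod[of "length P + j" n'] that by (simp add: n'_def nL_def)
    finally have "G (drop j YL) = Y' ! (length P + (j - 1))" using that by simp
    also have "\<dots> = Some (L ! (j - 1))"
    proof -
      have "Y' = map Some P @ (map Some L @ [None])" by (simp add: Y'_def dollar_word_def)
      hence "Y' ! (length P + (j - 1)) = (map Some L @ [None]) ! (j - 1)"
        by (metis length_map nth_append_length_plus)
      thus ?thesis using that by (simp add: nth_append nL_def)
    qed
    finally show ?thesis using that m by (simp add: YL_def dollar_word_def nth_append nL_def)
  qed
  define ins where "ins = [(rs ! (SAL ! m), bwt YL ! m). m \<leftarrow> [0..<length YL], SAL ! m \<noteq> 0]"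
  have ins_eq: "ins = map (\<lambda>z. (0 + length (filter (\<lambda>x. x < z) xs), G z)) zs"
  proof -
    have bL: "bwt YL = map (\<lambda>i. YL ! ((i + nL - 1) mod nL)) SAL" by (simp add: bwt_def SAL_def lens)
    have "ins = [(rs ! (SAL ! m), (\<lambda>i. YL ! ((i + nL - 1) mod nL)) (SAL ! m)). m \<leftarrow> [0..<length SAL], SAL ! m \<noteq> 0]"
      unfolding ins_def bL
      by (intro arg_cong[where f=concat] map_cong) (auto simp: SAL_def sa_length)
    also have "\<dots> = map (\<lambda>j. (rs ! j, YL ! ((j + nL - 1) mod nL))) (filter (\<lambda>j. j \<noteq> 0) SAL)"
      by (rule lc_filter)
    also have "\<dots> = map (\<lambda>j. (0 + length (filter (\<lambda>x. x < drop j YL) xs), G (drop j YL))) (filter (\<lambda>j. j \<noteq> 0) SAL)"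
    proof (rule map_cong[OF refl])
      fix j assume "j \<in> set (filter (\<lambda>j. j \<noteq> 0) SAL)"
      hence j: "0 < j" "j < nL" by (auto simp: SAL_def sa_set lens)
      show "(rs ! j, YL ! ((j + nL - 1) mod nL)) = (0 + length (filter (\<lambda>x. x < drop j YL) xs), G (drop j YL))"
        using rs_ok[OF j] pre_L[OF j] by simp
    qed
    finally show ?thesis by (simp add: zs_def comp_def)
  qed
  have sxs: "sorted_wrt (<) xs"
  proof -
    have "sorted_wrt (<) (map (\<lambda>i. drop i Y) SAY)"
      using sa_sorted_list[of Y] by (simp add: SAY_def)
    hence "sorted_wrt (\<lambda>i i'. drop i Y < drop i' Y) SAY" by (simp add: sorted_wrt_map)
    hence "sorted_wrt (\<lambda>i i'. drop i Y' < drop i' Y') SAY"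
      by (rule sorted_wrt_mono_rel[rotated]) (use A' in \<open>auto simp: SAY_def sa_set lens\<close>)
    thus ?thesis by (simp add: xs_def sorted_wrt_map)
  qed
  have szs: "sorted_wrt (<) zs"
  proof -
    have "sorted_wrt (<) (map (\<lambda>i. drop i YL) SAL)"
      using sa_sorted_list[of YL] by (simp add: SAL_def)
    hence "sorted_wrt (\<lambda>i i'. drop i YL < drop i' YL) SAL" by (simp add: sorted_wrt_map)
    hence "sorted_wrt (\<lambda>i i'. drop i YL < drop i' YL) (filter (\<lambda>j. j \<noteq> 0) SAL)"
      by (rule sorted_wrt_filter)
    thus ?thesis by (simp add: zs_def sorted_wrt_map)
  qed
  have disj: "set xs \<inter> set zs = {}"
  proof -
    have "\<forall>x\<in>set xs. length L < length x" by (auto simp: xs_def SAY_def sa_set lens n_def n'_def)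
    moreover have "\<forall>z\<in>set zs. length z \<le> length L" by (auto simp: zs_def SAL_def sa_set lens nL_def)
    ultimately show ?thesis by fastforce
  qed
  have lxs: "length xs = n" by (simp add: xs_def SAY_def sa_length lens)
  have lzs: "length zs = length L"
  proof -
    have "length (filter (\<lambda>j. j \<noteq> 0) SAL) = card ({j. j \<noteq> 0} \<inter> {0..<nL})"
      by (simp add: distinct_length_filter SAL_def sa_distinct sa_set lens)
    also have "{j. j \<noteq> 0} \<inter> {0..<nL} = {1..<nL}" by auto
    finally show ?thesis by (simp add: zs_def nL_def)
  qed
  have mrg: "merge_bwt (bwt Y) ins 0 = (map G (sorted_list_of_set (set xs \<union> set zs)), n + length L + 1)"
    using merge_correct[OF sxs szs disj, of G 0] bY ins_eq lxs lzs by simp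
  have sets: "set xs \<union> set zs = (\<lambda>i. drop i Y') ` {0..<n'}"
  proof -
    have s1: "set xs = (\<lambda>i. drop i Y') ` {0..<n}" by (simp add: xs_def SAY_def sa_set lens)
    have "set zs = (\<lambda>j. drop j YL) ` {1..<nL}"
      by (auto simp: zs_def SAL_def sa_set lens)
    also have "\<dots> = (\<lambda>j. drop (length P + j) Y') ` {1..<nL}" using d2' by simp
    also have "\<dots> = (\<lambda>i. drop i Y') ` {n..<n'}"
    proof (rule equalityI; rule subsetI)
      fix z assume "z \<in> (\<lambda>j. drop (length P + j) Y') ` {1..<nL}"
      then obtain j where j: "j \<in> {1..<nL}" "z = drop (length P + j) Y'" by blast
      have "length P + j \<in> {n..<n'}" using j(1) by (simp add: n_def n'_def nL_def)
      thus "z \<in> (\<lambda>i. drop i Y') ` {n..<n'}" using j(2) by blast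
    next
      fix z assume "z \<in> (\<lambda>i. drop i Y') ` {n..<n'}"
      then obtain i where i: "i \<in> {n..<n'}" "z = drop i Y'" by blast
      have "i - length P \<in> {1..<nL}" "length P + (i - length P) = i"
        using i(1) by (auto simp: n_def n'_def nL_def)
      thus "z \<in> (\<lambda>j. drop (length P + j) Y') ` {1..<nL}" using i(2)
        by (metis image_eqI)
    qed
    finally have "set zs = (\<lambda>i. drop i Y') ` {n..<n'}" .
    with s1 have "set xs \<union> set zs = (\<lambda>i. drop i Y') ` ({0..<n} \<union> {n..<n'})" by (simp add: image_Un)
    also have "{0..<n} \<union> {n..<n'} = {0..<n'}" by (auto simp: n_def n'_def)
    finally show ?thesis .
  qed
  have bY': "bwt Y' = map G (sorted_list_of_set (set xs \<union> set zs))"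
    unfolding sets bwt_pre[of Y'] sa_sorted_list G_def lens ..
  have "lynd_step (bwt Y) L = (case back_ranks (bwt Y) L of (rs, c_r) \<Rightarrow>
      (case merge_bwt (bwt Y) [(rs ! (SAL ! m), bwt YL ! m). m \<leftarrow> [0..<length YL], SAL ! m \<noteq> 0] 0 of
        (B', c_m) \<Rightarrow> (B', length YL + c_r + length YL + c_m)))"
    by (simp only: lynd_step_def Let_def YL_def SAL_def)
  also have "\<dots> = (case merge_bwt (bwt Y) ins 0 of (B', c_m) \<Rightarrow> (B', length YL + nL + length YL + c_m))"
    by (simp only: br prod.case ins_def)
  also have "\<dots> = (map G (sorted_list_of_set (set xs \<union> set zs)), length YL + nL + length YL + (n + length L + 1))"
    by (simp only: mrg prod.case)
  finally show ?thesis using bY' lens by (simp add: Y_def Y'_def nL_def n_def)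
qed



lemma run_correct:
  fixes Pfs Ls :: "('a::linorder) list list"
  assumes "\<forall>F\<in>set (Pfs @ Ls). lyndon F" "sorted_wrt (\<lambda>x y. x \<ge> y) (Pfs @ Ls)"
  shows "length (lynd_run (bwt (dollar_word (concat Pfs))) Ls) = length Ls \<and>
    (\<forall>i<length Ls. lynd_run (bwt (dollar_word (concat Pfs))) Ls ! i =
       (bwt (dollar_word (concat (Pfs @ take (Suc i) Ls))),
        4 * length (Ls ! i) + length (concat (Pfs @ take i Ls)) + 5))"
  using assms
proof (induction Ls arbitrary: Pfs)
  case Nil then show ?case by simp
next
  case (Cons L Ls)
  have lyL: "lyndon L" using Cons.prems by simp
  have ge: "\<forall>F\<in>set Pfs. lyndon F \<and> L \<le> F" using Cons.prems by (auto simp: sorted_wrt_append)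
  have good: "\<forall>w. suffix w (concat Pfs) \<and> w \<noteq> [] \<longrightarrow> L < w @ L"
    using good_concat[OF ge lyL] by blast
  have suf: "\<forall>j. 0 < j \<and> j < length L \<longrightarrow> L < drop j L"
    using lyndon_suffix_greater[OF lyL] by blast
  have st: "lynd_step (bwt (dollar_word (concat Pfs))) L =
     (bwt (dollar_word (concat (Pfs @ [L]))), 4 * length L + length (concat Pfs) + 5)"
    using lynd_step_correct[OF good suf] by simp
  have IH: "length (lynd_run (bwt (dollar_word (concat (Pfs @ [L])))) Ls) = length Ls \<and>
    (\<forall>i<length Ls. lynd_run (bwt (dollar_word (concat (Pfs @ [L])))) Ls ! i =
       (bwt (dollar_word (concat ((Pfs @ [L]) @ take (Suc i) Ls))),
        4 * length (Ls ! i) + length (concat ((Pfs @ [L]) @ take i Ls)) + 5))"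
    using Cons.IH[of "Pfs @ [L]"] Cons.prems by simp
  have run: "lynd_run (bwt (dollar_word (concat Pfs))) (L # Ls) =
      (bwt (dollar_word (concat (Pfs @ [L]))), 4 * length L + length (concat Pfs) + 5)
      # lynd_run (bwt (dollar_word (concat (Pfs @ [L])))) Ls"
    using st by simp
  show ?case
  proof (intro conjI allI impI)
    show "length (lynd_run (bwt (dollar_word (concat Pfs))) (L # Ls)) = length (L # Ls)"
      using run IH by simp
  next
    fix i assume i: "i < length (L # Ls)"
    show "lynd_run (bwt (dollar_word (concat Pfs))) (L # Ls) ! i =
       (bwt (dollar_word (concat (Pfs @ take (Suc i) (L # Ls)))),
        4 * length ((L # Ls) ! i) + length (concat (Pfs @ take i (L # Ls))) + 5)"
    proof (cases i)
      case 0 thus ?thesis using run by simp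
    next
      case (Suc i')
      thus ?thesis using run IH i by simp
    qed
  qed
qed

lemma bwt_None: "bwt [None] = [None]"
  by (simp add: bwt_def suffix_array_def)

lemma sum_prefix: "i < length Ls \<Longrightarrow> (\<Sum>j\<le>i. length (Ls ! j)) = length (concat (take (Suc i) Ls))"
proof (induction i)
  case 0 thus ?case by (cases Ls) auto
next
  case (Suc i)
  thus ?case by (simp add: take_Suc_conv_app_nth)
qed

theorem proposition3:
  "\<exists>c::nat. \<forall>(W::('a::{linorder,finite}) list) Ls.
     W \<noteq> [] \<longrightarrow> lyndon_factorization W Ls \<longrightarrow>
     (let T = bwt_lynd_trace Ls; k = length Ls; M = Max (length ` set Ls) in
        length T = k \<and>
        (\<forall>i<k. fst (T ! i) = bwt (dollar_word (concat (take (Suc i) Ls))) \<and>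
               snd (T ! i) \<le> c * (\<Sum>j\<le>i. length (Ls ! j))) \<and>
        fst (T ! (k - 1)) = bwt (dollar_word W) \<and>
        (\<Sum>i<k. snd (T ! i)) \<le> c * k\<^sup>2 * M)"
proof (intro exI[of _ 10] allI impI)
  fix W :: "'a list" and Ls
  assume W: "W \<noteq> []" and lf: "lyndon_factorization W Ls"
  define T where "T = bwt_lynd_trace Ls"
  define k where "k = length Ls"
  define M where "M = Max (length ` set Ls)"
  have cW: "concat Ls = W" and ly: "\<forall>F\<in>set Ls. lyndon F" and so: "sorted_wrt (\<lambda>x y. x \<ge> y) Ls"
    using lf by (auto simp: lyndon_factorization_def)
  have k0: "0 < k" using W cW by (cases Ls) (auto simp: k_def)
  have RC: "length T = k \<and> (\<forall>i<k. T ! i = (bwt (dollar_word (concat (take (Suc i) Ls))),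
        4 * length (Ls ! i) + length (concat (take i Ls)) + 5))"
    using run_correct[of "[]" Ls] ly so
    by (simp add: T_def k_def bwt_lynd_trace_def dollar_word_def bwt_None)
  have nonempty: "0 < length (Ls ! i)" if "i < k" for i
    using ly that by (auto simp: k_def lyndon_def)
  have bound: "snd (T ! i) \<le> 10 * (\<Sum>j\<le>i. length (Ls ! j))" if "i < k" for i
  proof -
    have "(\<Sum>j\<le>i. length (Ls ! j)) = length (concat (take i Ls)) + length (Ls ! i)"
      using sum_prefix[of i Ls] that by (simp add: k_def take_Suc_conv_app_nth)
    moreover have "snd (T ! i) = 4 * length (Ls ! i) + length (concat (take i Ls)) + 5"
      using RC that by simp
    ultimately show ?thesis using nonempty[OF that] by linarith
  qed
  have leM: "length (Ls ! j) \<le> M" if "j < k" for j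
    using that by (auto simp: M_def k_def intro!: Max_ge)
  have pre_le: "(\<Sum>j\<le>i. length (Ls ! j)) \<le> k * M" if "i < k" for i
  proof -
    have "(\<Sum>j\<le>i. length (Ls ! j)) \<le> (\<Sum>j\<le>i. M)"
      using leM that by (intro sum_mono) auto
    also have "\<dots> = Suc i * M" by simp
    also have "\<dots> \<le> k * M" using that by (intro mult_right_mono) auto
    finally show ?thesis .
  qed
  have "(\<Sum>i<k. snd (T ! i)) \<le> (\<Sum>i<k. 10 * (k * M))"
    by (intro sum_mono) (metis bound pre_le lessThan_iff mult_le_mono2 order_trans)
  also have "\<dots> = 10 * k\<^sup>2 * M" by (simp add: power2_eq_square)
  finally have tot: "(\<Sum>i<k. snd (T ! i)) \<le> 10 * k\<^sup>2 * M" .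
  have last: "fst (T ! (k - 1)) = bwt (dollar_word W)"
    using RC k0 cW by (simp add: k_def)
  show "let T = bwt_lynd_trace Ls; k = length Ls; M = Max (length ` set Ls) in
        length T = k \<and>
        (\<forall>i<k. fst (T ! i) = bwt (dollar_word (concat (take (Suc i) Ls))) \<and>
               snd (T ! i) \<le> 10 * (\<Sum>j\<le>i. length (Ls ! j))) \<and>
        fst (T ! (k - 1)) = bwt (dollar_word W) \<and>
        (\<Sum>i<k. snd (T ! i)) \<le> 10 * k\<^sup>2 * M"
    unfolding Let_def T_def[symmetric] k_def[symmetric] M_def[symmetric]
    using RC bound last tot by simp
qed

end
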